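(* A set $\mathcal{E}\subseteq \mathcal{D}/d$ is closed in the metric space $(\mathcal{D}/d, d)$ if and only if the following condition holds: for every sequence $(A_i)_{i\in\mathbb{N}}$ in $\mathcal{E}$ such that the nets $\{\nu^+(\vee_{k=i}^j A_k): i,j\in\mathbb{N}, i\le j\}$ and $\{\nu^-(\vee_{k=i}^j A_k): i,j\in\mathbb{N}, i\le j\}$ converge to a common limit $L$, the net $\{\vee_{k=i}^j A_k : i,j\in\mathbb{N}, i\le j\}$ converges (in the metric $d$) to some $A\in\mathcal{E}$ with $\nu^+(A)=L$.
   Context: Here $\mathbb{N}=\{0,1,2,\dots\}$ and for $n\ge 1$, $n$ also denotes the set $\{0,1,\dots,n-1\}$. For $A\subseteq\mathbb{N}$, $\nu^+(A):=\limsup_{n\to\infty}|A\cap n|/n$, $\nu^-(A):=\liminf_{n\to\infty}|A\cap n|/n$, and $\mathcal{D}$ is the collection of $A\subseteq\mathbb{N}$ for which $\lim_{n\to\infty}|A\cap n|/n$ exists. Define $d(A,B):=\nu^+(A\triangle B)$ on $\mathcal{P}(\mathbb{N})$, and $[A]:=\{B\subseteq\mathbb{N}: d(A,B)=0\}$. Let $\mathcal{P}(\mathbb{N})/d:=\{[A]:A\subseteq\mathbb{N}\}$ and $\mathcal{D}/d:=\{[A]:A\in\mathcal{D}\}$, with metric $d([A],[B]):=d(A,B)$ and functions $\nu^\pm([A]):=\nu^\pm(A)$ (well defined). $\mathcal{P}(\mathbb{N})/d$ is partially ordered by $[A]\le[B]\iff \nu^+(A\setminus B)=0$, and $\vee$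 denotes the least upper bound in this order (so $\vee_{k=i}^j [A_k]=[\bigcup_{k=i}^j A_k]$). The index set $\{(i,j): i,j\in\mathbb{N}, i\le j\}$ is directed by the product order $(i,j)\le(k,l)\iff i\le k$ and $j\le l$. *)

theory Defs
  imports "HOL-Analysis.Analysis" "HOL-Library.Liminf_Limsup"
begin

definition dens_ratio :: "nat set \<Rightarrow> nat \<Rightarrow> real" where
  "dens_ratio A n = real (card (A \<inter> {..<n})) / real n"

text \<open>Upper and lower asymptotic density (values lie in [0,1], so the
 extended-real limsup/liminf are finite).\<close>
definition nu_plus :: "nat set \<Rightarrow> real" where
  "nu_plus A = real_of_ereal (limsup (\<lambda>n. ereal (dens_ratio A n)))"

definition nu_minus :: "nat set \<Rightarrow> real" where
  "nu_minus A = real_of_ereal (liminf (\<lambda>n. ereal (dens_ratio A n)))"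

definition Dens :: "nat set set" where
  "Dens = {A. convergent (dens_ratio A)}"

definition dd :: "nat set \<Rightarrow> nat set \<Rightarrow> real" where
  "dd A B = nu_plus ((A - B) \<union> (B - A))"

definition cls :: "nat set \<Rightarrow> nat set set" where
  "cls A = {B. dd A B = 0}"

definition Dquot :: "nat set set set" where
  "Dquot = cls ` Dens"

definition closed_Dd :: "nat set set set \<Rightarrow> bool" where
  "closed_Dd E \<longleftrightarrow>
     (\<forall>A \<in> Dens. (\<forall>e>0. \<exists>B. cls B \<in> E \<and> dd A B < e) \<longrightarrow> cls A \<in> E)"

text \<open>Convergence of a real net indexed by {(i,j). i \<le> j} with the product order.\<close>
definition net_tendsto :: "(nat \<Rightarrow> nat \<Rightarrow> real) \<Rightarrow> real \<Rightarrow> bool" where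
  "net_tendsto f L \<longleftrightarrow>
     (\<forall>e>0. \<exists>i0 j0. i0 \<le> j0 \<and>
        (\<forall>i j. i0 \<le> i \<longrightarrow> j0 \<le> j \<longrightarrow> i \<le> j \<longrightarrow> \<bar>f i j - L\<bar> < e))"

text \<open>Representative of the join of [A_i],...,[A_j].\<close>
definition Ujoin :: "(nat \<Rightarrow> nat set) \<Rightarrow> nat \<Rightarrow> nat \<Rightarrow> nat set" where
  "Ujoin A i j = (\<Union>k\<in>{i..j}. A k)"

end

theory Submission
  imports Defs
begin
lemma ratio_nonneg: "0 \<le> dens_ratio X n" by (simp add: dens_ratio_def)
lemma ratio_le1: "dens_ratio X n \<le> 1"
proof (cases "n = 0")
  case True then show ?thesis by (simp add: dens_ratio_def)
next
  case False
  have "card (X \<inter> {..<n}) \<le> card {..<n}" by (rule card_mono) auto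
  then show ?thesis using False by (simp add: dens_ratio_def)
qed

lemma ratio_mono: "X \<subseteq> Y \<Longrightarrow> dens_ratio X n \<le> dens_ratio Y n"
  unfolding dens_ratio_def
  by (rule divide_right_mono) (auto intro!: card_mono)

lemma ratio_union: "dens_ratio (X \<union> Y) n \<le> dens_ratio X n + dens_ratio Y n"
proof -
  have "card ((X \<union> Y) \<inter> {..<n}) \<le> card (X \<inter> {..<n}) + card (Y \<inter> {..<n})"
    by (metis Int_Un_distrib2 card_Un_le)
  then have "real (card ((X \<union> Y) \<inter> {..<n})) \<le> real (card (X \<inter> {..<n})) + real (card (Y \<inter> {..<n}))"
    by linarith
  then show ?thesis unfolding dens_ratio_def by (simp add: add_divide_distrib[symmetric] divide_right_mono)
qed

lemma ratio_diff: "A \<subseteq> U \<Longrightarrow> dens_ratio (U - A) n = dens_ratio U n - dens_ratio A n"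
proof -
  assume "A \<subseteq> U"
  then have "(U - A) \<inter> {..<n} = (U \<inter> {..<n}) - (A \<inter> {..<n})" "A \<inter> {..<n} \<subseteq> U \<inter> {..<n}" by auto
  then have "card ((U - A) \<inter> {..<n}) = card (U \<inter> {..<n}) - card (A \<inter> {..<n})"
    by (simp add: card_Diff_subset)
  moreover have "card (A \<inter> {..<n}) \<le> card (U \<inter> {..<n})" using \<open>A \<subseteq> U\<close> by (auto intro!: card_mono)
  ultimately show ?thesis unfolding dens_ratio_def by (simp add: diff_divide_distrib of_nat_diff)
qed

lemma ls_bounds: "0 \<le> limsup (\<lambda>n. ereal (dens_ratio X n))" "limsup (\<lambda>n. ereal (dens_ratio X n)) \<le> 1"
  by (auto intro!: le_Limsup Limsup_bounded simp: ratio_nonneg ratio_le1)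

lemma li_bounds: "0 \<le> liminf (\<lambda>n. ereal (dens_ratio X n))" "liminf (\<lambda>n. ereal (dens_ratio X n)) \<le> 1"
  by (auto intro!: Liminf_le Liminf_bounded simp: ratio_nonneg ratio_le1)

lemma nu_plus_eq: "limsup (\<lambda>n. ereal (dens_ratio X n)) = ereal (nu_plus X)"
  unfolding nu_plus_def using ls_bounds[of X]
  by (metis abs_ereal_ge0 ereal_infty_less_eq(1) ereal_real' ereal_times(1) one_ereal_def order.trans)

lemma nu_minus_eq: "liminf (\<lambda>n. ereal (dens_ratio X n)) = ereal (nu_minus X)"
  unfolding nu_minus_def using li_bounds[of X]
  by (metis abs_ereal_ge0 ereal_infty_less_eq(1) ereal_real' ereal_times(1) one_ereal_def order.trans)

lemma B1: "nu_plus X < c \<Longrightarrow> eventually (\<lambda>n. dens_ratio X n < c) sequentially"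
  using Limsup_lessD[where y="ereal c" and F=sequentially and f="\<lambda>n. ereal (dens_ratio X n)"] nu_plus_eq[of X]
  by (metis (mono_tags, lifting) Limsup_lessD eventually_mono less_ereal.simps(1))

lemma B2: "eventually (\<lambda>n. dens_ratio X n \<le> c) sequentially \<Longrightarrow> nu_plus X \<le> c"
proof -
  assume "eventually (\<lambda>n. dens_ratio X n \<le> c) sequentially"
  then have "eventually (\<lambda>n. ereal (dens_ratio X n) \<le> ereal c) sequentially" by simp
  then have "limsup (\<lambda>n. ereal (dens_ratio X n)) \<le> ereal c" by (rule Limsup_bounded)
  then show ?thesis using nu_plus_eq[of X] by simp
qed

lemma B3: "c < nu_minus X \<Longrightarrow> eventually (\<lambda>n. c < dens_ratio X n) sequentially"
  using less_LiminfD[where y="ereal c" and F=sequentially and f="\<lambda>n. ereal (dens_ratio X n)"] nu_minus_eq[of X]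
  by simp

lemma B4: "eventually (\<lambda>n. c \<le> dens_ratio X n) sequentially \<Longrightarrow> c \<le> nu_minus X"
proof -
  assume "eventually (\<lambda>n. c \<le> dens_ratio X n) sequentially"
  then have "eventually (\<lambda>n. ereal c \<le> ereal (dens_ratio X n)) sequentially" by simp
  then have "ereal c \<le> liminf (\<lambda>n. ereal (dens_ratio X n))" by (rule Liminf_bounded)
  then show ?thesis using nu_minus_eq[of X] by simp
qed

lemma B2': "(\<And>e. e > 0 \<Longrightarrow> eventually (\<lambda>n. dens_ratio X n \<le> c + e) sequentially) \<Longrightarrow> nu_plus X \<le> c"
  using B2 by (meson field_le_epsilon)

lemma B4': "(\<And>e. e > 0 \<Longrightarrow> eventually (\<lambda>n. c - e \<le> dens_ratio X n) sequentially) \<Longrightarrow> c \<le> nu_minus X"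
proof -
  assume a: "\<And>e. e > 0 \<Longrightarrow> eventually (\<lambda>n. c - e \<le> dens_ratio X n) sequentially"
  have "c \<le> nu_minus X + e" if "e > 0" for e using B4[OF a[OF that]] by simp
  then show ?thesis by (meson field_le_epsilon)
qed

lemma nu_minus_le_plus: "nu_minus X \<le> nu_plus X"
  using Liminf_le_Limsup[of sequentially "\<lambda>n. ereal (dens_ratio X n)"] nu_plus_eq nu_minus_eq by simp

lemma nu_plus_nonneg: "0 \<le> nu_plus X"
  using ls_bounds(1)[of X] nu_plus_eq[of X] by simp

lemma nu_plus_mono: "X \<subseteq> Y \<Longrightarrow> nu_plus X \<le> nu_plus Y"
proof -
  assume "X \<subseteq> Y"
  have "limsup (\<lambda>n. ereal (dens_ratio X n)) \<le> limsup (\<lambda>n. ereal (dens_ratio Y n))"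
    by (rule Limsup_mono) (simp add: ratio_mono[OF \<open>X \<subseteq> Y\<close>])
  then show ?thesis by (simp add: nu_plus_eq)
qed

lemma nu_plus_union: "nu_plus (X \<union> Y) \<le> nu_plus X + nu_plus Y"
proof (rule B2')
  fix e :: real assume "e > 0"
  have "eventually (\<lambda>n. dens_ratio X n < nu_plus X + e/2) sequentially" by (rule B1) (use \<open>e>0\<close> in simp)
  moreover have "eventually (\<lambda>n. dens_ratio Y n < nu_plus Y + e/2) sequentially" by (rule B1) (use \<open>e>0\<close> in simp)
  ultimately show "eventually (\<lambda>n. dens_ratio (X \<union> Y) n \<le> nu_plus X + nu_plus Y + e) sequentially"
    proof eventually_elim
    case (elim n) then show ?case using ratio_union[of X Y n] by linarith
  qed
qed

lemma dd_nonneg: "0 \<le> dd X Y" by (simp add: dd_def nu_plus_nonneg)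
lemma dd_sym: "dd X Y = dd Y X" by (simp add: dd_def Un_commute)
lemma dd_refl: "dd X X = 0"
proof -
  have "nu_plus {} \<le> 0" by (rule B2) (simp add: dens_ratio_def)
  then show ?thesis using nu_plus_nonneg[of "{}"] by (simp add: dd_def)
qed

lemma dd_tri: "dd X Z \<le> dd X Y + dd Y Z"
proof -
  have "nu_plus ((X - Z) \<union> (Z - X)) \<le> nu_plus (((X - Y) \<union> (Y - X)) \<union> ((Y - Z) \<union> (Z - Y)))"
    by (rule nu_plus_mono) auto
  also have "\<dots> \<le> dd X Y + dd Y Z" unfolding dd_def by (rule nu_plus_union)
  finally show ?thesis by (simp add: dd_def)
qed

lemma plus_lip: "nu_plus X \<le> nu_plus Y + dd X Y"
proof -
  have "nu_plus X \<le> nu_plus (Y \<union> ((X - Y) \<union> (Y - X)))" by (rule nu_plus_mono) auto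
  also have "\<dots> \<le> nu_plus Y + dd X Y" unfolding dd_def by (rule nu_plus_union)
  finally show ?thesis .
qed

lemma plus_lip_abs: "\<bar>nu_plus X - nu_plus Y\<bar> \<le> dd X Y"
  using plus_lip[of X Y] plus_lip[of Y X] dd_sym[of X Y] by linarith

lemma minus_lip: "nu_minus Y - dd X Y \<le> nu_minus X"
proof (rule B4')
  fix e :: real assume "e > 0"
  have "eventually (\<lambda>n. nu_minus Y - e/2 < dens_ratio Y n) sequentially" by (rule B3) (use \<open>e>0\<close> in simp)
  moreover have "eventually (\<lambda>n. dens_ratio ((X - Y) \<union> (Y - X)) n < dd X Y + e/2) sequentially"
    unfolding dd_def by (rule B1) (use \<open>e>0\<close> in simp)
  ultimately show "eventually (\<lambda>n. nu_minus Y - dd X Y - e \<le> dens_ratio X n) sequentially"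
  proof eventually_elim
    case (elim n)
    have "dens_ratio Y n \<le> dens_ratio (X \<union> ((X - Y) \<union> (Y - X))) n" by (rule ratio_mono) auto
    also have "\<dots> \<le> dens_ratio X n + dens_ratio ((X - Y) \<union> (Y - X)) n" by (rule ratio_union)
    finally show ?case using elim by linarith
  qed
qed

lemma minus_lip_abs: "\<bar>nu_minus X - nu_minus Y\<bar> \<le> dd X Y"
  using minus_lip[of X Y] minus_lip[of Y X] dd_sym[of X Y] by linarith

lemma dd_sub: "A \<subseteq> U \<Longrightarrow> dd A U \<le> nu_plus U - nu_minus A"
proof -
  assume s: "A \<subseteq> U"
  have eq: "(A - U) \<union> (U - A) = U - A" using s by auto
  show ?thesis unfolding dd_def eq
  proof (rule B2')
    fix e :: real assume "e > 0"
    have "eventually (\<lambda>n. dens_ratio U n < nu_plus U + e/2) sequentially" by (rule B1) (use \<open>e>0\<close> in simp)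
    moreover have "eventually (\<lambda>n. nu_minus A - e/2 < dens_ratio A n) sequentially" by (rule B3) (use \<open>e>0\<close> in simp)
    ultimately show "eventually (\<lambda>n. dens_ratio (U - A) n \<le> nu_plus U - nu_minus A + e) sequentially"
    proof eventually_elim
      case (elim n) then show ?case using ratio_diff[OF s, of n] by linarith
    qed
  qed
qed

lemma dd_union_le: "(i::nat) \<le> j \<Longrightarrow> dd (\<Union>k\<in>{i..j}. X k) A \<le> (\<Sum>k=i..j. dd (X k) A)"
proof (induction j rule: dec_induct)
  case base then show ?case by simp
next
  case (step j)
  have u: "(\<Union>k\<in>{i..Suc j}. X k) = (\<Union>k\<in>{i..j}. X k) \<union> X (Suc j)"
    using step.hyps by (auto simp: le_Suc_eq) (metis atLeastAtMost_iff le_Suc_eq order.trans)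
  have "dd (\<Union>k\<in>{i..Suc j}. X k) A \<le> nu_plus ((((\<Union>k\<in>{i..j}. X k) - A) \<union> (A - (\<Union>k\<in>{i..j}. X k))) \<union> ((X (Suc j) - A) \<union> (A - X (Suc j))))"
    unfolding dd_def u by (rule nu_plus_mono) auto
  also have "\<dots> \<le> dd (\<Union>k\<in>{i..j}. X k) A + dd (X (Suc j)) A" unfolding dd_def by (rule nu_plus_union)
  also have "\<dots> \<le> (\<Sum>k=i..j. dd (X k) A) + dd (X (Suc j)) A" using step.IH by simp
  also have "\<dots> = (\<Sum>k=i..Suc j. dd (X k) A)" using step.hyps by simp
  finally show ?case .
qed

lemma dens_eq: "A \<in> Dens \<Longrightarrow> nu_minus A = nu_plus A"
proof -
  assume "A \<in> Dens"
  then obtain l where "dens_ratio A \<longlonglongrightarrow> l" by (auto simp: Dens_def convergent_def)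
  then have t: "(\<lambda>n. ereal (dens_ratio A n)) \<longlonglongrightarrow> ereal l" by (rule tendsto_ereal)
  have "liminf (\<lambda>n. ereal (dens_ratio A n)) = ereal l" by (rule lim_imp_Liminf[OF _ t]) simp
  moreover have "limsup (\<lambda>n. ereal (dens_ratio A n)) = ereal l" by (rule lim_imp_Limsup[OF _ t]) simp
  ultimately show ?thesis by (simp add: nu_plus_eq nu_minus_eq)
qed

lemma eq_dens: "nu_minus A = nu_plus A \<Longrightarrow> A \<in> Dens"
proof -
  assume eq: "nu_minus A = nu_plus A"
  have "dens_ratio A \<longlonglongrightarrow> nu_plus A"
  proof (rule tendstoI)
    fix e :: real assume "e > 0"
    have "eventually (\<lambda>n. dens_ratio A n < nu_plus A + e) sequentially" by (rule B1) (use \<open>e>0\<close> in simp)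
    moreover have "eventually (\<lambda>n. nu_plus A - e < dens_ratio A n) sequentially" by (rule B3) (use \<open>e>0\<close> eq in simp)
    ultimately show "eventually (\<lambda>n. dist (dens_ratio A n) (nu_plus A) < e) sequentially"
      by eventually_elim (simp add: dist_real_def abs_less_iff)
  qed
  then show ?thesis by (auto simp: Dens_def convergent_def)
qed

lemma cls_eq: "dd A B = 0 \<Longrightarrow> cls A = cls B"
proof -
  assume h: "dd A B = 0"
  have "dd A C = 0 \<longleftrightarrow> dd B C = 0" for C
    using dd_tri[of A C B] dd_tri[of B C A] dd_sym[of A B] dd_nonneg[of A C] dd_nonneg[of B C] h by linarith
  then show ?thesis unfolding cls_def by simp
qed

lemma geom_eq: "(k::nat) \<le> m \<Longrightarrow> (\<Sum>r\<in>{k..<m}. (1/2::real)^r) = 2*(1/2)^k - 2*(1/2)^m"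
proof (induction m rule: dec_induct)
  case base then show ?case by simp
next
  case (step m) then show ?case by (simp add: sum.atLeastLessThan_Suc)
qed

lemma geom_le: "(\<Sum>r\<in>{k..<m}. (1/2::real)^r) \<le> 2*(1/2)^k"
  by (cases "k \<le> m") (simp_all add: geom_eq)

lemma telescope:
  fixes C :: "nat \<Rightarrow> nat set"
  assumes "k \<le> q" "(\<forall>r. k \<le> r \<and> r < q \<longrightarrow> (x \<in> C r \<longleftrightarrow> x \<in> C (Suc r)))"
  shows "x \<in> C q \<longleftrightarrow> x \<in> C k"
  using assms
proof (induction q rule: dec_induct)
  case base then show ?case by simp
next
  case (step q) then show ?case by auto
qed

lemma complete:
  fixes C :: "nat \<Rightarrow> nat set"
  assumes dC: "\<And>r. dd (C r) (C (Suc r)) < (1/2)^r"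
  shows "\<exists>B. \<forall>k. dd (C k) B \<le> 2*(1/2)^k"
proof -
  define S where "S r = (C r - C (Suc r)) \<union> (C (Suc r) - C r)" for r
  have ex: "\<exists>M. \<forall>n\<ge>M. real (card (S r \<inter> {..<n})) \<le> (1/2)^r * real n" for r
  proof -
    have "eventually (\<lambda>n. dens_ratio (S r) n < (1/2)^r) sequentially"
      using dC[of r] unfolding S_def dd_def by (rule B1)
    then obtain M where M: "\<And>n. n \<ge> M \<Longrightarrow> dens_ratio (S r) n < (1/2)^r"
      by (auto simp: eventually_sequentially)
    show ?thesis
    proof (intro exI allI impI)
      fix n assume "n \<ge> M"
      show "real (card (S r \<inter> {..<n})) \<le> (1/2)^r * real n"
      proof (cases "n = 0")
        case True then show ?thesis by simp
      next
        case False
        then show ?thesis using M[OF \<open>n\<ge>M\<close>] by (simp add: dens_ratio_def divide_less_eq)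
      qed
    qed
  qed
  then obtain M where M: "\<And>r n. n \<ge> M r \<Longrightarrow> real (card (S r \<inter> {..<n})) \<le> (1/2)^r * real n"
    by metis
  define N where "N r = rec_nat 0 (\<lambda>r x. max (Suc x) (M r)) r" for r
  have N0: "N 0 = 0" and NS: "N (Suc r) = max (Suc (N r)) (M r)" for r by (simp_all add: N_def)
  have smN: "strict_mono N" unfolding strict_mono_Suc_iff using NS by (simp add: less_max_iff_disj)
  have monoN: "mono N" using smN by (simp add: strict_mono_mono)
  have Nge: "r \<le> N r" for r using smN by (simp add: seq_suble)
  define K where "K n = Max {q. N q \<le> n}" for n
  have finK: "finite {q. N q \<le> n}" for n
    by (rule finite_subset[of _ "{..n}"]) (use Nge le_trans in blast, simp)
  have K1: "N (K n) \<le> n" for n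
  proof -
    have "0 \<in> {q. N q \<le> n}" using N0 by simp
    then have "{q. N q \<le> n} \<noteq> {}" by blast
    from Max_in[OF finK[of n] this] show ?thesis unfolding K_def by simp
  qed
  have K2: "N q \<le> n \<Longrightarrow> q \<le> K n" for q n
    unfolding K_def using finK by (simp add: Max_ge)
  have Kmono: "x \<le> n \<Longrightarrow> K x \<le> K n" for x n
    using K1[of x] K2[of "K x" n] by simp
  define B where "B = {x. x \<in> C (K x)}"
  have count: "real (card (((C k - B) \<union> (B - C k)) \<inter> {..<n})) \<le> real (N k) + 2*(1/2)^k * real n" for k n
  proof -
    have sub: "((C k - B) \<union> (B - C k)) \<inter> {..<n} \<subseteq> {..<N k} \<union> (\<Union>r\<in>{k..<K n}. S r \<inter> {..<n})"
    proof
      fix x assume x: "x \<in> ((C k - B) \<union> (B - C k)) \<inter> {..<n}"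
      show "x \<in> {..<N k} \<union> (\<Union>r\<in>{k..<K n}. S r \<inter> {..<n})"
      proof (cases "x < N k")
        case True then show ?thesis by simp
      next
        case False
        then have kq: "k \<le> K x" using K2[of k x] by simp
        have xq: "K x \<le> K n" using x Kmono[of x n] by simp
        have "\<not> (x \<in> C (K x) \<longleftrightarrow> x \<in> C k)" using x unfolding B_def by auto
        then obtain r where r: "k \<le> r" "r < K x" "\<not> (x \<in> C r \<longleftrightarrow> x \<in> C (Suc r))"
          using telescope[OF kq, of x C] by blast
        then have "x \<in> S r \<inter> {..<n}" using x unfolding S_def by auto
        moreover have "r \<in> {k..<K n}" using r xq by simp
        ultimately show ?thesis by blast
      qed
    qed
    have "card (((C k - B) \<union> (B - C k)) \<inter> {..<n}) \<le> card ({..<N k} \<union> (\<Union>r\<in>{k..<K n}. S r \<inter> {..<n}))"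
      by (rule card_mono[OF _ sub]) simp
    also have "\<dots> \<le> card {..<N k} + card (\<Union>r\<in>{k..<K n}. S r \<inter> {..<n})"
      by (rule card_Un_le)
    finally have c0: "card (((C k - B) \<union> (B - C k)) \<inter> {..<n}) \<le> N k + card (\<Union>r\<in>{k..<K n}. S r \<inter> {..<n})"
      by simp
    have cU: "card (\<Union>r\<in>{k..<K n}. S r \<inter> {..<n}) \<le> (\<Sum>r\<in>{k..<K n}. card (S r \<inter> {..<n}))"
      by (rule card_UN_le) simp
    have cUr: "real (card (\<Union>r\<in>{k..<K n}. S r \<inter> {..<n})) \<le> (\<Sum>r\<in>{k..<K n}. real (card (S r \<inter> {..<n})))"
      using cU by (metis of_nat_le_iff of_nat_sum)
    have c1: "real (card (((C k - B) \<union> (B - C k)) \<inter> {..<n})) \<le> real (N k) + (\<Sum>r\<in>{k..<K n}. real (card (S r \<inter> {..<n})))"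
      using c0 cUr by linarith
    have "(\<Sum>r\<in>{k..<K n}. real (card (S r \<inter> {..<n}))) \<le> (\<Sum>r\<in>{k..<K n}. (1/2)^r * real n)"
    proof (rule sum_mono)
      fix r assume "r \<in> {k..<K n}"
      then have "Suc r \<le> K n" by simp
      then have "N (Suc r) \<le> N (K n)" using monoN by (simp add: monoD)
      then have "M r \<le> n" using K1[of n] NS[of r] by simp
      then show "real (card (S r \<inter> {..<n})) \<le> (1/2)^r * real n" by (rule M)
    qed
    also have "\<dots> = (\<Sum>r\<in>{k..<K n}. (1/2::real)^r) * real n" by (simp add: sum_distrib_right)
    also have "\<dots> \<le> 2*(1/2)^k * real n" by (rule mult_right_mono[OF geom_le]) simp
    finally show ?thesis using c1 by linarith
  qed
  have "dd (C k) B \<le> 2*(1/2)^k" for k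
    unfolding dd_def
  proof (rule B2')
    fix e :: real assume "e > 0"
    obtain m :: nat where m: "real (N k) / e < m" using reals_Archimedean2 by blast
    show "eventually (\<lambda>n. dens_ratio ((C k - B) \<union> (B - C k)) n \<le> 2*(1/2)^k + e) sequentially"
      unfolding eventually_sequentially
    proof (intro exI allI impI)
      fix n assume "n \<ge> Suc m"
      then have npos: "real n > 0" and nm: "real m < real n" by auto
      have a1: "real (N k) < real m * e" using m \<open>e>0\<close> by (simp add: pos_divide_less_eq)
      have a2: "real m * e < real n * e" using nm \<open>e>0\<close> by simp
      have "real (N k) < e * real n" using a1 a2 by (simp add: mult.commute)
      then have "real (card (((C k - B) \<union> (B - C k)) \<inter> {..<n})) \<le> (2*(1/2)^k + e) * real n"
        using count[of k n] by (simp add: algebra_simps)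
      then show "dens_ratio ((C k - B) \<union> (B - C k)) n \<le> 2*(1/2)^k + e"
        unfolding dens_ratio_def using npos by (simp add: divide_le_eq)
    qed
  qed
  then show ?thesis by blast
qed

lemma Ujoin_same: "Ujoin A i i = A i" by (simp add: Ujoin_def)
lemma Ujoin_sub1: "i \<le> j \<Longrightarrow> A i \<subseteq> Ujoin A i j" by (auto simp: Ujoin_def)
lemma Ujoin_sub2: "i \<le> j \<Longrightarrow> A j \<subseteq> Ujoin A i j" by (auto simp: Ujoin_def)

lemma pow_small: "(e::real) > 0 \<Longrightarrow> \<exists>k. 2*(1/2::real)^k < e"
proof -
  assume "e > 0"
  then obtain k where "(1/2::real)^k < e/2" using real_arch_pow_inv[of "e/2" "1/2::real"] by auto
  then have "2*(1/2::real)^k < e" by simp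
  then show ?thesis by blast
qed

lemma pow_mono2: "(k::nat) \<le> k' \<Longrightarrow> 2*(1/2::real)^k' \<le> 2*(1/2)^k"
  by (simp add: power_decreasing)

lemma forward:
  fixes A :: "nat \<Rightarrow> nat set" and E :: "nat set set set"
  assumes cl: "closed_Dd E" and AE: "\<forall>i. cls (A i) \<in> E"
    and np: "net_tendsto (\<lambda>i j. nu_plus (Ujoin A i j)) L"
    and nm: "net_tendsto (\<lambda>i j. nu_minus (Ujoin A i j)) L"
  shows "\<exists>B. cls B \<in> E \<and> nu_plus B = L \<and> net_tendsto (\<lambda>i j. dd (Ujoin A i j) B) 0"
proof -
  have thr: "\<exists>M. \<forall>i j. M \<le> i \<longrightarrow> i \<le> j \<longrightarrow> \<bar>nu_plus (Ujoin A i j) - L\<bar> < e \<and> \<bar>nu_minus (Ujoin A i j) - L\<bar> < e"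
    if "e > 0" for e
  proof -
    obtain i0 j0 where a: "i0 \<le> j0" "\<And>i j. i0 \<le> i \<Longrightarrow> j0 \<le> j \<Longrightarrow> i \<le> j \<Longrightarrow> \<bar>nu_plus (Ujoin A i j) - L\<bar> < e"
      using np \<open>e>0\<close> unfolding net_tendsto_def by blast
    obtain i1 j1 where b: "i1 \<le> j1" "\<And>i j. i1 \<le> i \<Longrightarrow> j1 \<le> j \<Longrightarrow> i \<le> j \<Longrightarrow> \<bar>nu_minus (Ujoin A i j) - L\<bar> < e"
      using nm \<open>e>0\<close> unfolding net_tendsto_def by blast
    show ?thesis
      by (rule exI[of _ "max j0 j1"]) (use a b in auto)
  qed
  have dU: "\<exists>M. \<forall>i j. M \<le> i \<longrightarrow> i \<le> j \<longrightarrow> dd (A i) (Ujoin A i j) < e" if "e > 0" for e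
  proof -
    obtain M where M: "\<And>i j. M \<le> i \<Longrightarrow> i \<le> j \<Longrightarrow> \<bar>nu_plus (Ujoin A i j) - L\<bar> < e/2 \<and> \<bar>nu_minus (Ujoin A i j) - L\<bar> < e/2"
      using thr[of "e/2"] \<open>e>0\<close> by auto
    show ?thesis
    proof (intro exI allI impI)
      fix i j assume ij: "M \<le> i" "i \<le> j"
      have "dd (A i) (Ujoin A i j) \<le> nu_plus (Ujoin A i j) - nu_minus (A i)"
        by (rule dd_sub[OF Ujoin_sub1[OF ij(2)]])
      moreover have "\<bar>nu_minus (A i) - L\<bar> < e/2" using M[of i i] ij by (simp add: Ujoin_same)
      ultimately show "dd (A i) (Ujoin A i j) < e" using M[OF ij] by linarith
    qed
  qed
  have cau0: "dd (A i) (A i') < e" if "M \<le> i" "i \<le> i'"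
    "\<And>i j. M \<le> i \<Longrightarrow> i \<le> j \<Longrightarrow> \<bar>nu_plus (Ujoin A i j) - L\<bar> < e/4 \<and> \<bar>nu_minus (Ujoin A i j) - L\<bar> < e/4"
    for M i i' e
  proof -
    have "dd (A i) (Ujoin A i i') \<le> nu_plus (Ujoin A i i') - nu_minus (A i)"
      by (rule dd_sub[OF Ujoin_sub1[OF that(2)]])
    moreover have "dd (A i') (Ujoin A i i') \<le> nu_plus (Ujoin A i i') - nu_minus (A i')"
      by (rule dd_sub[OF Ujoin_sub2[OF that(2)]])
    moreover have "\<bar>nu_minus (A i) - L\<bar> < e/4" using that(3)[of i i] that(1) by (simp add: Ujoin_same)
    moreover have "\<bar>nu_minus (A i') - L\<bar> < e/4" using that(3)[of i' i'] that(1,2) by (simp add: Ujoin_same)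
    moreover have "\<bar>nu_plus (Ujoin A i i') - L\<bar> < e/4" using that(3)[of i i'] that(1,2) by simp
    moreover have "dd (A i) (A i') \<le> dd (A i) (Ujoin A i i') + dd (Ujoin A i i') (A i')" by (rule dd_tri)
    ultimately show ?thesis using dd_sym[of "Ujoin A i i'" "A i'"] by linarith
  qed
  have cau: "\<exists>M. \<forall>i i'. M \<le> i \<longrightarrow> M \<le> i' \<longrightarrow> dd (A i) (A i') < e" if "e > 0" for e
  proof -
    obtain M where M: "\<And>i j. M \<le> i \<Longrightarrow> i \<le> j \<Longrightarrow> \<bar>nu_plus (Ujoin A i j) - L\<bar> < e/4 \<and> \<bar>nu_minus (Ujoin A i j) - L\<bar> < e/4"
      using thr[of "e/4"] \<open>e>0\<close> by auto
    show ?thesis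
    proof (intro exI allI impI)
      fix i i' assume "M \<le> i" "M \<le> i'"
      show "dd (A i) (A i') < e"
      proof (cases "i \<le> i'")
        case True then show ?thesis using cau0[OF \<open>M \<le> i\<close> True M] by blast
      next
        case False
        then have "i' \<le> i" by simp
        from cau0[OF \<open>M \<le> i'\<close> this M] show ?thesis by (simp add: dd_sym)
      qed
    qed
  qed
  have "\<forall>r. \<exists>M. \<forall>i i'. M \<le> i \<longrightarrow> M \<le> i' \<longrightarrow> dd (A i) (A i') < (1/2)^r"
    using cau by simp
  then obtain T where T: "\<And>r i i'. T r \<le> i \<Longrightarrow> T r \<le> i' \<Longrightarrow> dd (A i) (A i') < (1/2)^r"
    by metis
  define phi where "phi r = r + (\<Sum>s\<le>r. T s)" for r
  have phiT: "T r \<le> phi r" "T r \<le> phi (Suc r)" for r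
  proof -
    have "T r \<le> (\<Sum>s\<le>r. T s)" by (rule member_le_sum) auto
    moreover have "T r \<le> (\<Sum>s\<le>Suc r. T s)" by (rule member_le_sum) auto
    ultimately show "T r \<le> phi r" "T r \<le> phi (Suc r)" unfolding phi_def by auto
  qed
  have phige: "r \<le> phi r" for r unfolding phi_def by simp
  have "\<And>r. dd (A (phi r)) (A (phi (Suc r))) < (1/2)^r" using T phiT by blast
  from complete[of "\<lambda>r. A (phi r)", OF this]
  obtain B where B: "\<And>k. dd (A (phi k)) B \<le> 2*(1/2)^k" by blast
  have net: "net_tendsto (\<lambda>i j. dd (Ujoin A i j) B) 0"
    unfolding net_tendsto_def
  proof (intro allI impI)
    fix e :: real assume "e > 0"
    obtain M1 where M1: "\<And>i j. M1 \<le> i \<Longrightarrow> i \<le> j \<Longrightarrow> dd (A i) (Ujoin A i j) < e/3"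
      using dU[of "e/3"] \<open>e>0\<close> by auto
    obtain M2 where M2: "\<And>i i'. M2 \<le> i \<Longrightarrow> M2 \<le> i' \<Longrightarrow> dd (A i) (A i') < e/3"
      using cau[of "e/3"] \<open>e>0\<close> by auto
    obtain k where k: "2*(1/2::real)^k < e/3" using pow_small[of "e/3"] \<open>e>0\<close> by auto
    define k' where "k' = max k M2"
    have k': "2*(1/2::real)^k' < e/3" using pow_mono2[of k k'] k unfolding k'_def by linarith
    have pk: "M2 \<le> phi k'" using phige[of k'] unfolding k'_def by simp
    show "\<exists>i0 j0. i0 \<le> j0 \<and> (\<forall>i j. i0 \<le> i \<longrightarrow> j0 \<le> j \<longrightarrow> i \<le> j \<longrightarrow> \<bar>dd (Ujoin A i j) B - 0\<bar> < e)"
    proof (intro exI conjI allI impI)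
      show "max M1 M2 \<le> max M1 M2" by simp
      fix i j assume ij: "max M1 M2 \<le> i" "max M1 M2 \<le> j" "i \<le> j"
      have a: "dd (Ujoin A i j) (A i) < e/3" using M1[of i j] ij by (simp add: dd_sym)
      have b: "dd (A i) (A (phi k')) < e/3" using M2[of i "phi k'"] ij pk by simp
      have c: "dd (A (phi k')) B < e/3" using B[of k'] k' by simp
      have "dd (Ujoin A i j) B \<le> dd (Ujoin A i j) (A i) + dd (A i) B" by (rule dd_tri)
      also have "\<dots> \<le> dd (Ujoin A i j) (A i) + (dd (A i) (A (phi k')) + dd (A (phi k')) B)"
        using dd_tri[of "A i" B "A (phi k')"] by simp
      finally show "\<bar>dd (Ujoin A i j) B - 0\<bar> < e" using a b c dd_nonneg[of "Ujoin A i j" B] by simp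
    qed
  qed
  have close: "\<exists>m. dd (Ujoin A m m) B < e \<and> \<bar>nu_plus (Ujoin A m m) - L\<bar> < e \<and> \<bar>nu_minus (Ujoin A m m) - L\<bar> < e"
    if "e > 0" for e
  proof -
    obtain i0 j0 where n: "i0 \<le> j0" "\<And>i j. i0 \<le> i \<Longrightarrow> j0 \<le> j \<Longrightarrow> i \<le> j \<Longrightarrow> \<bar>dd (Ujoin A i j) B - 0\<bar> < e"
      using net \<open>e>0\<close> unfolding net_tendsto_def by blast
    obtain M where M: "\<And>i j. M \<le> i \<Longrightarrow> i \<le> j \<Longrightarrow> \<bar>nu_plus (Ujoin A i j) - L\<bar> < e \<and> \<bar>nu_minus (Ujoin A i j) - L\<bar> < e"
      using thr[of e] \<open>e>0\<close> by auto
    show ?thesis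
      by (rule exI[of _ "max j0 M"]) (use n(1) n(2)[of "max j0 M" "max j0 M"] M[of "max j0 M" "max j0 M"] in auto)
  qed
  have plusL: "nu_plus B = L"
  proof -
    have "\<bar>nu_plus B - L\<bar> < 2*e" if "e > 0" for e
    proof -
      obtain m where m: "dd (Ujoin A m m) B < e" "\<bar>nu_plus (Ujoin A m m) - L\<bar> < e"
        using close[OF \<open>e>0\<close>] by blast
      then show ?thesis using plus_lip_abs[of "Ujoin A m m" B] by linarith
    qed
    then have "\<bar>nu_plus B - L\<bar> \<le> 0" by (metis field_le_epsilon less_eq_real_def mult_2 add_0 add.commute field_sum_of_halves half_gt_zero)
    then show ?thesis by simp
  qed
  have minusL: "nu_minus B = L"
  proof -
    have "\<bar>nu_minus B - L\<bar> < 2*e" if "e > 0" for e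
    proof -
      obtain m where m: "dd (Ujoin A m m) B < e" "\<bar>nu_minus (Ujoin A m m) - L\<bar> < e"
        using close[OF \<open>e>0\<close>] by blast
      then show ?thesis using minus_lip_abs[of "Ujoin A m m" B] by linarith
    qed
    then have "\<bar>nu_minus B - L\<bar> \<le> 0" by (metis field_le_epsilon less_eq_real_def mult_2 add_0 add.commute field_sum_of_halves half_gt_zero)
    then show ?thesis by simp
  qed
  have BD: "B \<in> Dens" using plusL minusL by (intro eq_dens) simp
  have "\<forall>e>0. \<exists>B'. cls B' \<in> E \<and> dd B B' < e"
  proof (intro allI impI)
    fix e :: real assume "e > 0"
    obtain m where m: "dd (Ujoin A m m) B < e" using close[OF \<open>e>0\<close>] by blast
    then show "\<exists>B'. cls B' \<in> E \<and> dd B B' < e"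
      using AE by (intro exI[of _ "A m"]) (simp add: Ujoin_same dd_sym)
  qed
  then have "cls B \<in> E" using cl BD unfolding closed_Dd_def by blast
  then show ?thesis using plusL net by blast
qed

lemma backward:
  fixes E :: "nat set set set"
  assumes H: "\<forall>A :: nat \<Rightarrow> nat set. (\<forall>i. cls (A i) \<in> E) \<longrightarrow>
      (\<forall>L. net_tendsto (\<lambda>i j. nu_plus (Ujoin A i j)) L \<and>
           net_tendsto (\<lambda>i j. nu_minus (Ujoin A i j)) L \<longrightarrow>
           (\<exists>B. cls B \<in> E \<and> nu_plus B = L \<and>
                net_tendsto (\<lambda>i j. dd (Ujoin A i j) B) 0))"
  shows "closed_Dd E"
  unfolding closed_Dd_def
proof (intro ballI impI)
  fix A0 assume A0: "A0 \<in> Dens" and cl: "\<forall>e>0. \<exists>B. cls B \<in> E \<and> dd A0 B < e"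
  have "\<forall>k. \<exists>B. cls B \<in> E \<and> dd A0 B < (1/2)^k" using cl by simp
  then obtain Bs where Bs: "\<And>k. cls (Bs k) \<in> E" "\<And>k. dd A0 (Bs k) < (1/2)^k" by metis
  define L where "L = nu_plus A0"
  have bnd: "dd (Ujoin Bs i j) A0 \<le> 2*(1/2)^i" if "i \<le> j" for i j
  proof -
    have "dd (Ujoin Bs i j) A0 \<le> (\<Sum>k=i..j. dd (Bs k) A0)" unfolding Ujoin_def by (rule dd_union_le[OF that])
    also have "\<dots> \<le> (\<Sum>k=i..j. (1/2::real)^k)"
      by (rule sum_mono) (use Bs(2) dd_sym less_imp_le in metis)
    also have "\<dots> = (\<Sum>k\<in>{i..<Suc j}. (1/2::real)^k)" by (simp add: atLeastLessThanSuc_atLeastAtMost)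
    also have "\<dots> \<le> 2*(1/2)^i" by (rule geom_le)
    finally show ?thesis .
  qed
  have nets: "net_tendsto (\<lambda>i j. nu_plus (Ujoin Bs i j)) L \<and> net_tendsto (\<lambda>i j. nu_minus (Ujoin Bs i j)) L"
    unfolding net_tendsto_def
  proof (intro conjI allI impI)
    fix e :: real assume "e > 0"
    obtain k where k: "2*(1/2::real)^k < e" using pow_small[OF \<open>e>0\<close>] by blast
    show "\<exists>i0 j0. i0 \<le> j0 \<and> (\<forall>i j. i0 \<le> i \<longrightarrow> j0 \<le> j \<longrightarrow> i \<le> j \<longrightarrow> \<bar>nu_plus (Ujoin Bs i j) - L\<bar> < e)"
    proof (intro exI conjI allI impI)
      show "k \<le> k" by simp
      fix i j assume ij: "k \<le> i" "k \<le> j" "i \<le> j"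
      show "\<bar>nu_plus (Ujoin Bs i j) - L\<bar> < e"
        using plus_lip_abs[of "Ujoin Bs i j" A0] bnd[OF ij(3)] pow_mono2[OF ij(1)] k unfolding L_def by linarith
    qed
  next
    fix e :: real assume "e > 0"
    obtain k where k: "2*(1/2::real)^k < e" using pow_small[OF \<open>e>0\<close>] by blast
    show "\<exists>i0 j0. i0 \<le> j0 \<and> (\<forall>i j. i0 \<le> i \<longrightarrow> j0 \<le> j \<longrightarrow> i \<le> j \<longrightarrow> \<bar>nu_minus (Ujoin Bs i j) - L\<bar> < e)"
    proof (intro exI conjI allI impI)
      show "k \<le> k" by simp
      fix i j assume ij: "k \<le> i" "k \<le> j" "i \<le> j"
      show "\<bar>nu_minus (Ujoin Bs i j) - L\<bar> < e"
        using minus_lip_abs[of "Ujoin Bs i j" A0] bnd[OF ij(3)] pow_mono2[OF ij(1)] k dens_eq[OF A0]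
        unfolding L_def by linarith
    qed
  qed
  obtain B' where B': "cls B' \<in> E" "net_tendsto (\<lambda>i j. dd (Ujoin Bs i j) B') 0"
    using H Bs(1) nets by blast
  have "dd A0 B' < 2*e" if "e > 0" for e
  proof -
    obtain i0 j0 where n: "i0 \<le> j0" "\<And>i j. i0 \<le> i \<Longrightarrow> j0 \<le> j \<Longrightarrow> i \<le> j \<Longrightarrow> \<bar>dd (Ujoin Bs i j) B' - 0\<bar> < e"
      using B'(2) \<open>e>0\<close> unfolding net_tendsto_def by blast
    obtain k where k: "2*(1/2::real)^k < e" using pow_small[OF \<open>e>0\<close>] by blast
    define m where "m = max j0 k"
    have a: "dd (Ujoin Bs m m) B' < e" using n(1) n(2)[of m m] unfolding m_def by simp
    have km: "k \<le> m" unfolding m_def by simp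
    have b: "dd A0 (Ujoin Bs m m) < e" using bnd[of m m] pow_mono2[OF km] k dd_sym[of A0 "Ujoin Bs m m"] by linarith
    show ?thesis using dd_tri[of A0 B' "Ujoin Bs m m"] a b by linarith
  qed
  then have "dd A0 B' \<le> 0"
    by (metis field_le_epsilon less_eq_real_def mult_2 add_0 add.commute field_sum_of_halves half_gt_zero)
  then have "dd A0 B' = 0" using dd_nonneg[of A0 B'] by simp
  then show "cls A0 \<in> E" using cls_eq B'(1) by simp
qed

theorem theorem1p2:
  fixes E :: "nat set set set"
  assumes "E \<subseteq> Dquot"
  shows "closed_Dd E \<longleftrightarrow>
    (\<forall>A :: nat \<Rightarrow> nat set. (\<forall>i. cls (A i) \<in> E) \<longrightarrow>
      (\<forall>L. net_tendsto (\<lambda>i j. nu_plus (Ujoin A i j)) L \<and>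
           net_tendsto (\<lambda>i j. nu_minus (Ujoin A i j)) L \<longrightarrow>
           (\<exists>B. cls B \<in> E \<and> nu_plus B = L \<and>
                net_tendsto (\<lambda>i j. dd (Ujoin A i j) B) 0)))"
  using forward backward by blast

end
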